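(* Let $p\ge 30$ be a prime such that $-1$ is a quadratic residue modulo $p$ and $2$ and $3$ are quadratic non-residues modulo $p$. Then the path system $\mathcal{P}_p$ on the Paley graph $G_p$ is irreducible.
   Context: Let $R$ and $N$ denote the sets of nonzero quadratic residues and quadratic non-residues in $\mathbb{F}_p$. The Paley graph $G_p$ has vertex set $\mathbb{F}_p$, with $a,b$ adjacent iff $a-b\in R$. A path system $\mathcal{P}$ in a graph $G=(V,E)$ is a collection of simple paths such that for every pair of distinct vertices $u,v$ there is exactly one path $P_{u,v}\in\mathcal{P}$ connecting them. A partition $V=A\sqcup B$ with $A,B\neq\emptyset$ is a reduction of $\mathcal{P}$ if for all $u,v\in A$ all vertices of $P_{u,v}$ lie in $A$, and for all $u,v\in B$ all vertices of $P_{u,v}$ lie in $B$; $\mathcal{P}$ is irreducible if it has no reduction. The path system $\mathcal{P}_p$ is defined for $a\neq b\in\mathbb{F}_p$ by: if $b-a\in R$, then $P_{a,b}=(a,b)$; if $b-a=3$, then $P_{a,b}=(a,a+1,a+2,b)$ (and $P_{b,a}$ is the same path); if $b-a\in N$ and $b-a\neq\pm3$, then $P_{a,b}=(a,\tfrac{a+b}{2},b)$. *)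

theory Defs
  imports "HOL-Number_Theory.Number_Theory"
begin

text \<open>F_p is modelled by the integers {0..<p}, arithmetic taken mod p.\<close>

definition Fp :: "int \<Rightarrow> int set" where
  "Fp p = {0..<p}"

definition QR :: "int \<Rightarrow> int \<Rightarrow> bool" where
  "QR p x \<longleftrightarrow> x mod p \<noteq> 0 \<and> QuadRes p x"

definition QNR :: "int \<Rightarrow> int \<Rightarrow> bool" where
  "QNR p x \<longleftrightarrow> x mod p \<noteq> 0 \<and> \<not> QuadRes p x"

definition paley_adj :: "int \<Rightarrow> int \<Rightarrow> int \<Rightarrow> bool" where
  "paley_adj p a b \<longleftrightarrow> QR p (a - b)"

definition half_sum :: "int \<Rightarrow> int \<Rightarrow> int \<Rightarrow> int" where
  "half_sum p a b = (THE c. c \<in> Fp p \<and> [2 * c = a + b] (mod p))"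

definition paley_path :: "int \<Rightarrow> int \<Rightarrow> int \<Rightarrow> int list" where
  "paley_path p a b =
     (if QR p (b - a) then [a, b]
      else if [b - a = 3] (mod p) then [a, (a + 1) mod p, (a + 2) mod p, b]
      else if [a - b = 3] (mod p) then rev [b, (b + 1) mod p, (b + 2) mod p, a]
      else [a, half_sum p a b, b])"

definition is_reduction :: "'v set \<Rightarrow> ('v \<Rightarrow> 'v \<Rightarrow> 'v list) \<Rightarrow> 'v set \<Rightarrow> 'v set \<Rightarrow> bool" where
  "is_reduction V P A B \<longleftrightarrow>
     A \<union> B = V \<and> A \<inter> B = {} \<and> A \<noteq> {} \<and> B \<noteq> {} \<and>
     (\<forall>u\<in>A. \<forall>v\<in>A. u \<noteq> v \<longrightarrow> set (P u v) \<subseteq> A) \<and>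
     (\<forall>u\<in>B. \<forall>v\<in>B. u \<noteq> v \<longrightarrow> set (P u v) \<subseteq> B)"

definition irreducible_path_system :: "'v set \<Rightarrow> ('v \<Rightarrow> 'v \<Rightarrow> 'v list) \<Rightarrow> bool" where
  "irreducible_path_system V P \<longleftrightarrow> \<not> (\<exists>A B. is_reduction V P A B)"

end

theory Submission
  imports Defs
begin


lemma QuadRes_cong: "[x = y] (mod p) \<Longrightarrow> QuadRes p x = QuadRes p y"
  unfolding QuadRes_def by (meson cong_sym cong_trans)

lemma small_dvd_zero:
  fixes p z :: int
  assumes "p dvd z" "\<bar>z\<bar> < p" shows "z = 0"
proof (rule ccontr)
  assume "z \<noteq> 0"
  then have "\<bar>p\<bar> \<le> \<bar>z\<bar>" using dvd_imp_le_int assms(1) by blast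
  moreover have "p > 0" using assms(2) by linarith
  ultimately show False using assms(2) by simp
qed

lemma nqr_mult_sq:
  fixes p c k :: int
  assumes "prime p" "\<not> QuadRes p c" "\<not> p dvd k"
  shows "\<not> QuadRes p (c * k^2)"
proof
  assume "QuadRes p (c*k^2)"
  then obtain y where y: "[y^2 = c*k^2] (mod p)" by (auto simp: QuadRes_def)
  have "coprime p k" using assms prime_imp_coprime by blast
  then have "coprime k p" by (simp add: coprime_commute)
  then obtain k' where k': "[k*k' = 1] (mod p)" using cong_solve_coprime_int by blast
  have "[y^2 * k'^2 = c*k^2*k'^2] (mod p)" using y cong_mult cong_refl by blast
  moreover have "y^2 * k'^2 = (y*k')^2" by (simp add: power_mult_distrib)
  moreover have "c*k^2*k'^2 = c*(k*k')^2" by (simp add: power_mult_distrib)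
  moreover have "[c*(k*k')^2 = c*1^2] (mod p)" using k' cong_pow cong_mult cong_refl by blast
  ultimately have "[(y*k')^2 = c] (mod p)" by (metis cong_trans mult_1_right power_one)
  then have "QuadRes p c" unfolding QuadRes_def by blast
  with assms show False by simp
qed

lemma half_unique:
  fixes p c c' :: int
  assumes "prime p" "p > 2" "c \<in> Fp p" "c' \<in> Fp p" "[2*c = 2*c'] (mod p)"
  shows "c = c'"
proof -
  have "p dvd 2*(c - c')" using assms(5) by (simp add: cong_iff_dvd_diff right_diff_distrib)
  then have "p dvd 2 \<or> p dvd (c - c')" using assms(1) prime_dvd_mult_iff by blast
  moreover have "\<not> p dvd 2"
  proof
    assume "p dvd 2"
    then have "\<bar>p\<bar> \<le> 2" using dvd_imp_le_int[of 2 p] by simp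
    then show False using assms(2) by simp
  qed
  ultimately have "p dvd (c - c')" by blast
  moreover have "\<bar>c - c'\<bar> < p" using assms(3,4) by (auto simp: Fp_def)
  ultimately show ?thesis using small_dvd_zero[of p "c - c'"] by simp
qed

lemma mid:
  fixes p d x :: int
  assumes p: "prime p" "p \<ge> 30" and nq: "\<not> QuadRes p (2*d)" and d: "0 < d" "2*d+3 < p"
    and cl: "\<forall>v\<in>S. \<forall>w\<in>S. v \<noteq> w \<longrightarrow> set (paley_path p v w) \<subseteq> S"
    and xs: "x mod p \<in> S" "(x + 2*d) mod p \<in> S"
  shows "(x + d) mod p \<in> S"
proof -
  define v where "v = x mod p"
  define w where "w = (x+2*d) mod p"
  have wv: "[w - v = 2*d] (mod p)" unfolding v_def w_def cong_def by (simp add: mod_diff_eq)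
  have nQR: "\<not> QR p (w - v)" using QuadRes_cong[OF wv] nq unfolding QR_def by simp
  have n3: "\<not> [w - v = 3] (mod p)"
  proof
    assume "[w - v = 3] (mod p)"
    then have "[2*d = 3] (mod p)" using wv by (meson cong_sym cong_trans)
    then have "p dvd 2*d - 3" by (simp add: cong_iff_dvd_diff)
    moreover have "\<bar>2*d - 3\<bar> < p" using d by auto
    ultimately have "2*d - 3 = 0" using small_dvd_zero by blast
    then show False by presburger
  qed
  have n3': "\<not> [v - w = 3] (mod p)"
  proof
    assume "[v - w = 3] (mod p)"
    moreover have "[v - w = -(2*d)] (mod p)" using wv by (metis cong_minus_minus_iff minus_diff_eq)
    ultimately have "[-(2*d) = 3] (mod p)" by (meson cong_sym cong_trans)
    then have "p dvd -(2*d) - 3" by (simp add: cong_iff_dvd_diff)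
    then have "p dvd 2*d + 3" by (metis dvd_minus_iff minus_diff_eq diff_minus_eq_add add.commute minus_add_distrib)
    moreover have "\<bar>2*d + 3\<bar> < p" using d by auto
    ultimately have "2*d + 3 = 0" using small_dvd_zero by blast
    then show False using d by simp
  qed
  have pp: "p > 2" using p by simp
  have hin: "(x+d) mod p \<in> Fp p" using pp by (simp add: Fp_def)
  have hc1: "(2*((x+d) mod p)) mod p = (2*(x+d)) mod p" by (simp add: mod_mult_right_eq)
  have hc2: "(v + w) mod p = (x + (x+2*d)) mod p" unfolding v_def w_def by (simp add: mod_add_eq)
  have hc3: "2*(x+d) = x + (x+2*d)" by simp
  have hc: "[2*((x+d) mod p) = v + w] (mod p)"
    unfolding cong_def using hc1 hc2 hc3 by simp
  have h: "half_sum p v w = (x+d) mod p"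
    unfolding half_sum_def
  proof (rule the_equality)
    show "(x+d) mod p \<in> Fp p \<and> [2*((x+d) mod p) = v + w] (mod p)" using hin hc by simp
  next
    fix c assume c: "c \<in> Fp p \<and> [2 * c = v + w] (mod p)"
    then have "[2 * c = 2*((x+d) mod p)] (mod p)" using cong_trans[OF _ cong_sym[OF hc]] by blast
    then show "c = (x+d) mod p" using half_unique[OF p(1) pp] hin c by blast
  qed
  have vw: "v \<noteq> w"
  proof
    assume "v = w"
    then have "p dvd 2*d" using wv by (simp add: cong_iff_dvd_diff)
    moreover have "\<bar>2*d\<bar> < p" using d by auto
    ultimately show False using small_dvd_zero[of p "2*d"] d by simp
  qed
  have pth: "paley_path p v w = [v, half_sum p v w, w]"
    using nQR n3 n3' by (simp add: paley_path_def)
  have "v \<in> S" "w \<in> S" using xs v_def w_def by auto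
  then have "set (paley_path p v w) \<subseteq> S" using cl vw by blast
  moreover have "(x+d) mod p \<in> set (paley_path p v w)" unfolding pth h by simp
  ultimately show ?thesis by blast
qed

lemma three:
  fixes p x :: int
  assumes p: "prime p" "p \<ge> 30" and nq: "\<not> QuadRes p 3"
    and cl: "\<forall>v\<in>S. \<forall>w\<in>S. v \<noteq> w \<longrightarrow> set (paley_path p v w) \<subseteq> S"
    and xs: "x mod p \<in> S" "(x + 3) mod p \<in> S"
  shows "(x + 1) mod p \<in> S \<and> (x + 2) mod p \<in> S"
proof -
  define v where "v = x mod p"
  define w where "w = (x+3) mod p"
  have wv: "[w - v = 3] (mod p)" unfolding v_def w_def cong_def by (simp add: mod_diff_eq)
  have nQR: "\<not> QR p (w - v)" using QuadRes_cong[OF wv] nq unfolding QR_def by simp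
  have vw: "v \<noteq> w"
  proof
    assume "v = w"
    then have "p dvd 3" using wv by (simp add: cong_iff_dvd_diff)
    then have "\<bar>p\<bar> \<le> 3" using dvd_imp_le_int[of 3 p] by simp
    then show False using p by simp
  qed
  have "paley_path p v w = [v, (v+1) mod p, (v+2) mod p, w]"
    using nQR wv by (simp add: paley_path_def)
  moreover have "(v+1) mod p = (x+1) mod p" "(v+2) mod p = (x+2) mod p"
    unfolding v_def by (simp_all add: mod_add_left_eq)
  moreover have "v \<in> S" "w \<in> S" using xs v_def w_def by auto
  ultimately have pth: "paley_path p v w = [v, (x+1) mod p, (x+2) mod p, w]" and vS: "v \<in> S" and wS: "w \<in> S"
    by simp_all
  have "set (paley_path p v w) \<subseteq> S" using cl vw vS wS by blast
  then show ?thesis unfolding pth by simp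
qed

lemma sq_large:
  fixes x :: int
  assumes "x \<ge> 48"
  shows "\<exists>k>0. x + 2 \<le> 2*k^2 \<and> k^2 + 2 \<le> x"
proof -
  have ex: "\<exists>K::nat. x + 2 \<le> 2 * (int K)^2"
  proof
    show "x + 2 \<le> 2 * (int (nat (x+2)))^2" using assms by (simp add: power2_eq_square)
  qed
  define K where "K = (LEAST K::nat. x + 2 \<le> 2 * (int K)^2)"
  have K1: "x + 2 \<le> 2*(int K)^2" unfolding K_def by (rule LeastI_ex[OF ex])
  have K0: "K > 0" using K1 assms by (cases K) auto
  have K2: "\<not> (x + 2 \<le> 2*(int (K-1))^2)"
    using not_less_Least[of "K-1" "\<lambda>K. x + 2 \<le> 2 * (int K)^2"] K0 unfolding K_def by simp
  define j where "j = int K - 1"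
  have jK: "int (K-1) = j" "int K = j + 1" using K0 j_def by auto
  have j0: "j \<ge> 0" using K0 j_def by simp
  have a: "2*j^2 \<le> x + 1" using K2 jK by simp
  have b: "x + 2 \<le> 2*(j+1)^2" using K1 jK by simp
  have j4: "j \<ge> 4"
  proof (rule ccontr)
    assume "\<not> j \<ge> 4"
    then have "j + 1 \<le> 4" by simp
    then have "(j+1)^2 \<le> 4^2" using j0 by (intro power_mono) auto
    then show False using b assms by simp
  qed
  have "j*j \<ge> 4*j" using j4 j0 by (simp add: mult_right_mono)
  moreover have "(j+1)^2 + 2 = j*j + 2*j + 3" by (simp add: power2_eq_square algebra_simps)
  moreover have "2*j^2 = 2*(j*j)" by (simp add: power2_eq_square)
  ultimately have "(j+1)^2 + 2 \<le> x" using a j4 by linarith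
  moreover have "j + 1 > 0" using j0 by simp
  ultimately show ?thesis using b by blast
qed

lemma exA:
  fixes a :: int
  assumes "a \<ge> 5"
  shows "\<exists>k>0. (a+2 \<le> 2*k^2 \<and> k^2+1 \<le> a) \<or> (a+2 \<le> 12*k^2 \<and> 6*k^2+1 \<le> a)"
proof -
  consider "a \<le> 6" | "7 \<le> a \<and> a \<le> 10" | "11 \<le> a \<and> a \<le> 16" | "17 \<le> a \<and> a \<le> 30"
    | "31 \<le> a \<and> a \<le> 46" | "47 \<le> a \<and> a \<le> 47" | "a \<ge> 48" by linarith
  then show ?thesis
  proof cases
    case 1 then show ?thesis using assms by (intro exI[of _ 2]) auto
  next
    case 2 then show ?thesis by (intro exI[of _ 1]) auto
  next
    case 3 then show ?thesis by (intro exI[of _ 3]) auto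
  next
    case 4 then show ?thesis by (intro exI[of _ 4]) auto
  next
    case 5 then show ?thesis by (intro exI[of _ 2]) auto
  next
    case 6 then show ?thesis by (intro exI[of _ 5]) auto
  next
    case 7
    then obtain k where "k > 0" "a + 2 \<le> 2*k^2" "k^2 + 2 \<le> a" using sq_large by blast
    then show ?thesis by (intro exI[of _ k]) auto
  qed
qed

lemma exB:
  fixes b :: int
  assumes "b \<ge> 6"
  shows "\<exists>k>0. (b+1 \<le> 2*k^2 \<and> k^2+2 \<le> b) \<or> (b+1 \<le> 12*k^2 \<and> 6*k^2+2 \<le> b)"
proof -
  consider "b \<le> 7" | "8 \<le> b \<and> b \<le> 11" | "12 \<le> b \<and> b \<le> 17" | "18 \<le> b \<and> b \<le> 31"
    | "32 \<le> b \<and> b \<le> 47" | "b \<ge> 48" by linarith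
  then show ?thesis
  proof cases
    case 1 then show ?thesis using assms by (intro exI[of _ 2]) auto
  next
    case 2 then show ?thesis by (intro exI[of _ 1]) auto
  next
    case 3 then show ?thesis by (intro exI[of _ 3]) auto
  next
    case 4 then show ?thesis by (intro exI[of _ 4]) auto
  next
    case 5 then show ?thesis by (intro exI[of _ 2]) auto
  next
    case 6
    then obtain k where "k > 0" "b + 2 \<le> 2*k^2" "k^2 + 2 \<le> b" using sq_large by blast
    then show ?thesis by (intro exI[of _ k]) auto
  qed
qed


theorem proposition2p1:
  fixes p :: int
  assumes "prime p" and "p \<ge> 30"
    and "QuadRes p (-1)" and "\<not> QuadRes p 2" and "\<not> QuadRes p 3"
  shows "irreducible_path_system (Fp p) (paley_path p)"
  unfolding irreducible_path_system_def
proof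
  have pp: "p > 2" using assms by simp
  assume "\<exists>A B. is_reduction (Fp p) (paley_path p) A B"
  then obtain A B where red: "is_reduction (Fp p) (paley_path p) A B" by blast
  have U: "A \<union> B = Fp p" and D: "A \<inter> B = {}" and An: "A \<noteq> {}" and Bn: "B \<noteq> {}"
    and clA: "\<forall>v\<in>A. \<forall>w\<in>A. v \<noteq> w \<longrightarrow> set (paley_path p v w) \<subseteq> A"
    and clB: "\<forall>v\<in>B. \<forall>w\<in>B. v \<noteq> w \<longrightarrow> set (paley_path p v w) \<subseteq> B"
    using red unfolding is_reduction_def by blast+
  have inF: "x mod p \<in> A \<or> x mod p \<in> B" for x
  proof -
    have "x mod p \<in> Fp p" using pp by (simp add: Fp_def)
    then show ?thesis using U by blast
  qed
  have nb: "x \<in> A \<Longrightarrow> x \<in> B \<Longrightarrow> False" for x using D by blast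
  obtain u where uA: "u mod p \<in> A" and uB: "(u+1) mod p \<in> B"
  proof -
    obtain a0 where a0: "a0 \<in> A" using An by blast
    obtain b0 where b0: "b0 \<in> B" using Bn by blast
    show thesis
    proof (rule ccontr)
      assume nt: "\<not> thesis"
      have step: "x mod p \<in> A \<Longrightarrow> (x+1) mod p \<in> A" for x
        using that nt inF by blast
      have "a0 \<in> {0..<p}" using a0 U by (auto simp: Fp_def)
      then have a0r: "a0 mod p = a0" by simp
      have all: "(a0 + int n) mod p \<in> A" for n
      proof (induction n)
        case 0 then show ?case using a0 a0r by simp
      next
        case (Suc n)
        have "(a0 + int n + 1) mod p \<in> A" using step Suc by blast
        then show ?case by (simp add: ac_simps)
      qed
      have "b0 \<in> {0..<p}" using b0 U by (auto simp: Fp_def)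
      then have b0r: "b0 mod p = b0" by simp
      have "(a0 + int (nat ((b0 - a0) mod p))) mod p = (a0 + (b0 - a0) mod p) mod p"
        using pp by simp
      also have "\<dots> = b0 mod p" by (simp add: mod_add_right_eq)
      finally have "b0 \<in> A" using all[of "nat ((b0 - a0) mod p)"] b0r by simp
      then show False using b0 nb by blast
    qed
  qed
  define f where "f = (\<lambda>x. (u + x) mod p)"
  define good where "good = (\<lambda>d::int. \<not> QuadRes p (2*d) \<and> 0 < d \<and> 2*d+3 < p)"
  have f0: "f 0 \<in> A" using uA by (simp add: f_def)
  have f1: "f 1 \<in> B" using uB by (simp add: f_def)
  have fAB: "f x \<in> A \<or> f x \<in> B" for x unfolding f_def using inF by blast
  have RA: "f (m - d) \<in> A" if g: "good d" and h1: "f m \<in> A" and h2: "f (m + d) \<in> B" for m d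
  proof (rule ccontr)
    assume "f (m - d) \<notin> A"
    then have h3: "(u + m - d) mod p \<in> B" using fAB[of "m-d"] by (simp add: f_def add_diff_eq)
    have h4: "(u + m - d + 2*d) mod p \<in> B" using h2 by (simp add: f_def algebra_simps)
    have "(u + m - d + d) mod p \<in> B"
      using mid[OF assms(1,2) _ _ _ clB h3 h4] g unfolding good_def by blast
    then have "f m \<in> B" by (simp add: f_def)
    then show False using h1 nb by blast
  qed
  have RB: "f (m + d) \<in> B" if g: "good d" and h1: "f m \<in> B" and h2: "f (m - d) \<in> A" for m d
  proof (rule ccontr)
    assume "f (m + d) \<notin> B"
    then have h4: "(u + m - d + 2*d) mod p \<in> A" using fAB[of "m+d"] by (simp add: f_def algebra_simps)
    have h3: "(u + m - d) mod p \<in> A" using h2 by (simp add: f_def add_diff_eq)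
    have "(u + m - d + d) mod p \<in> A"
      using mid[OF assms(1,2) _ _ _ clA h3 h4] g unfolding good_def by blast
    then have "f m \<in> A" by (simp add: f_def)
    then show False using h1 nb by blast
  qed
  have TA: "f (x+1) \<in> A \<and> f (x+2) \<in> A" if "f x \<in> A" "f (x+3) \<in> A" for x
    using three[OF assms(1,2,5) clA, of "u+x"] that by (simp add: f_def add.assoc)
  have TB: "f (x+1) \<in> B \<and> f (x+2) \<in> B" if "f x \<in> B" "f (x+3) \<in> B" for x
    using three[OF assms(1,2,5) clB, of "u+x"] that by (simp add: f_def add.assoc)
  have ndvd: "\<not> p dvd k" if "k > 0" "k^2 < p" for k
  proof
    assume "p dvd k"
    then have "p \<le> k" using that zdvd_imp_le by blast
    moreover have "1 * k \<le> k * k" using that by (intro mult_right_mono) auto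
    moreover have "k^2 = k * k" by (simp add: power2_eq_square)
    ultimately show False using that by linarith
  qed
  have goodk: "good (k^2)" if "k > 0" "2*k^2+3 < p" for k
  proof -
    have "k^2 < p" using that zero_le_power2[of k] by linarith
    then have "\<not> QuadRes p (2 * k^2)" using nqr_mult_sq[OF assms(1,4) ndvd[OF that(1)]] by simp
    moreover have "0 < k^2" using that by simp
    ultimately show ?thesis using that unfolding good_def by simp
  qed
  have good6: "good (6*k^2)" if "k > 0" "12*k^2+3 < p" for k
  proof -
    have "(2*k)^2 = 4*k^2" by (simp add: power_mult_distrib)
    then have "(2*k)^2 < p" using that zero_le_power2[of k] by linarith
    moreover have "2*k > 0" using that by simp
    ultimately have "\<not> QuadRes p (3 * (2*k)^2)" using nqr_mult_sq[OF assms(1,5) ndvd[of "2*k"]] by simp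
    moreover have "3 * (2*k)^2 = 2 * (6*k^2)" by (simp add: power_mult_distrib)
    moreover have "0 < k^2" using that by simp
    ultimately show ?thesis using that unfolding good_def by simp
  qed
  have good1: "good 1" using assms(4) pp assms(2) unfolding good_def by simp
  have good4: "good 4" using goodk[of 2] assms(2) by simp
  have fm1: "f (-1) \<in> A" using RA[OF good1 f0] f1 by simp
  have f2: "f 2 \<in> B" using RB[OF good1 f1] f0 by simp
  have f3: "f 3 \<in> B"
  proof (rule ccontr)
    assume "f 3 \<notin> B"
    then have "f 3 \<in> A" using fAB by blast
    then have "f 1 \<in> A" using TA[of 0] f0 by simp
    then show False using f1 nb by blast
  qed
  have fm2: "f (-2) \<in> A"
  proof (rule ccontr)
    assume "f (-2) \<notin> A"
    then have "f (-2) \<in> B" using fAB by blast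
    then have "f (-1) \<in> B" using TB[of "-2"] f1 by simp
    then show False using fm1 nb by blast
  qed
  have fm5: "f (-5) \<in> A" using RA[OF good4 fm1] f3 by simp
  have fm6: "f (-6) \<in> A" using RA[OF good4 fm2] f2 by simp
  have f6: "f 6 \<in> B" using RB[OF good4 f2] fm2 by simp
  have f7: "f 7 \<in> B" using RB[OF good4 f3] fm1 by simp
  have fm43: "f (-4) \<in> A" "f (-3) \<in> A" using TA[of "-5"] fm5 fm2 by simp_all
  have f45: "f 4 \<in> B" "f 5 \<in> B" using TB[of 3] f3 f6 by simp_all
  define Inv where "Inv = (\<lambda>a b. (\<forall>x. -a \<le> x \<and> x \<le> 0 \<longrightarrow> f x \<in> A) \<and> (\<forall>x. 1 \<le> x \<and> x \<le> b \<longrightarrow> f x \<in> B))"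
  have base: "Inv 6 7"
  proof -
    have "f x \<in> A" if "-6 \<le> x" "x \<le> 0" for x
    proof -
      have "x = -6 \<or> x = -5 \<or> x = -4 \<or> x = -3 \<or> x = -2 \<or> x = -1 \<or> x = 0" using that by linarith
      then show ?thesis using fm6 fm5 fm43 fm2 fm1 f0 by auto
    qed
    moreover have "f x \<in> B" if "1 \<le> x" "x \<le> 7" for x
    proof -
      have "x = 1 \<or> x = 2 \<or> x = 3 \<or> x = 4 \<or> x = 5 \<or> x = 6 \<or> x = 7" using that by linarith
      then show ?thesis using f1 f2 f3 f45 f6 f7 by auto
    qed
    ultimately show ?thesis unfolding Inv_def by auto
  qed
  have dA: "\<exists>d. good d \<and> a+2 \<le> 2*d \<and> d+1 \<le> a" if tA: "a \<ge> 5" "2*a + 2 \<le> p" for a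
  proof -
    obtain k where k: "k > 0" "(a+2 \<le> 2*k^2 \<and> k^2+1 \<le> a) \<or> (a+2 \<le> 12*k^2 \<and> 6*k^2+1 \<le> a)"
      using exA[OF tA(1)] by blast
    from k(2) show ?thesis
    proof
      assume h: "a+2 \<le> 2*k^2 \<and> k^2+1 \<le> a"
      then have "good (k^2)" using goodk[OF k(1)] tA by simp
      then show ?thesis using h by blast
    next
      assume h: "a+2 \<le> 12*k^2 \<and> 6*k^2+1 \<le> a"
      then have "good (6*k^2)" using good6[OF k(1)] tA by simp
      then show ?thesis using h by (intro exI[of _ "6*k^2"]) simp
    qed
  qed
  have dB: "\<exists>d. good d \<and> b+1 \<le> 2*d \<and> d+2 \<le> b" if tB: "b \<ge> 6" "2*b + 1 \<le> p" for b
  proof -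
    obtain k where k: "k > 0" "(b+1 \<le> 2*k^2 \<and> k^2+2 \<le> b) \<or> (b+1 \<le> 12*k^2 \<and> 6*k^2+2 \<le> b)"
      using exB[OF tB(1)] by blast
    from k(2) show ?thesis
    proof
      assume h: "b+1 \<le> 2*k^2 \<and> k^2+2 \<le> b"
      then have "good (k^2)" using goodk[OF k(1)] tB by simp
      then show ?thesis using h by blast
    next
      assume h: "b+1 \<le> 12*k^2 \<and> 6*k^2+2 \<le> b"
      then have "good (6*k^2)" using good6[OF k(1)] tB by simp
      then show ?thesis using h by (intro exI[of _ "6*k^2"]) simp
    qed
  qed
  have stepI: "\<exists>a' b'. a' + b' = a + b + 1 \<and> 6 \<le> a' \<and> 7 \<le> b' \<and> Inv a' b'"
    if ab: "6 \<le> a" "7 \<le> b" "a + b \<le> p - 1" and I: "Inv a b" for a b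
  proof (cases "a < b")
    case True
    then obtain d where d: "good d" "a+2 \<le> 2*d" "d+1 \<le> a" using dA[of a] ab by auto
    have d0: "0 < d" using d(1) unfolding good_def by simp
    define m where "m = d - (a+1)"
    have "f m \<in> A" using I d0 d unfolding Inv_def m_def by auto
    moreover have "f (m + d) \<in> B" using I d True unfolding Inv_def m_def by auto
    ultimately have "f (m - d) \<in> A" using RA[OF d(1)] by blast
    then have new: "f (-(a+1)) \<in> A" by (simp add: m_def)
    have "Inv (a+1) b"
      unfolding Inv_def
    proof (intro conjI allI impI)
      fix x assume "-(a+1) \<le> x \<and> x \<le> 0"
      then show "f x \<in> A"
        using I new unfolding Inv_def by (cases "x = -(a+1)") auto
    next
      fix x assume "1 \<le> x \<and> x \<le> b" then show "f x \<in> B" using I unfolding Inv_def by auto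
    qed
    then show ?thesis using ab by (intro exI[of _ "a+1"] exI[of _ b]) auto
  next
    case False
    then obtain d where d: "good d" "b+1 \<le> 2*d" "d+2 \<le> b" using dB[of b] ab by auto
    have d0: "0 < d" using d(1) unfolding good_def by simp
    define m where "m = b + 1 - d"
    have "f m \<in> B" using I d0 d unfolding Inv_def m_def by auto
    moreover have "f (m - d) \<in> A" using I d False unfolding Inv_def m_def by auto
    ultimately have "f (m + d) \<in> B" using RB[OF d(1)] by blast
    then have new: "f (b+1) \<in> B" by (simp add: m_def)
    have "Inv a (b+1)"
      unfolding Inv_def
    proof (intro conjI allI impI)
      fix x assume "-a \<le> x \<and> x \<le> 0"
      then show "f x \<in> A" using I unfolding Inv_def by auto
    next
      fix x assume "1 \<le> x \<and> x \<le> b+1"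
      then show "f x \<in> B"
        using I new unfolding Inv_def by (cases "x = b+1") auto
    qed
    then show ?thesis using ab by (intro exI[of _ a] exI[of _ "b+1"]) auto
  qed
  have grow: "13 + int n \<le> p \<longrightarrow> (\<exists>a b. a + b = 13 + int n \<and> 6 \<le> a \<and> 7 \<le> b \<and> Inv a b)" for n
  proof (induction n)
    case 0 then show ?case using base by (intro impI exI[of _ 6] exI[of _ 7]) auto
  next
    case (Suc n)
    show ?case
    proof
      assume "13 + int (Suc n) \<le> p"
      then obtain a b where "a + b = 13 + int n" "6 \<le> a" "7 \<le> b" "Inv a b" using Suc by auto
      moreover have "a + b \<le> p - 1" using calculation(1) \<open>13 + int (Suc n) \<le> p\<close> by simp
      ultimately show "\<exists>a b. a + b = 13 + int (Suc n) \<and> 6 \<le> a \<and> 7 \<le> b \<and> Inv a b"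
        using stepI by fastforce
    qed
  qed
  obtain a b where ab: "a + b = p" "6 \<le> a" "7 \<le> b" "Inv a b"
    using grow[of "nat (p - 13)"] assms(2) by auto
  have "f b \<in> B" using ab unfolding Inv_def by auto
  moreover have "f (b - p) \<in> A" using ab unfolding Inv_def by auto
  moreover have "f (b - p) = f b"
  proof -
    have "f (b - p) = ((u + b) + (-1) * p) mod p" unfolding f_def by (simp add: algebra_simps)
    also have "\<dots> = (u + b) mod p" by (rule mod_mult_self1)
    finally show ?thesis unfolding f_def .
  qed
  ultimately show False using nb by metis
qed


end
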